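(* If $(T,X)$ is a uniformly syndetically regularly stable compact flow ($T$ a Hausdorff topological group, $X$ compact Hausdorff), then $(T,X)$ is an a.p. flow.
   Context: $\mathscr U_X$ is the uniformity of $X$; for $A\subseteq T$ and $\delta\in\mathscr U_X$, $A\delta=\{(ax,ay):a\in A,(x,y)\in\delta\}$. $A\subseteq T$ is (right) syndetic if there is compact $K\subseteq T$ with $Kt\cap A\neq\emptyset$ for all $t$. $(T,X)$ is uniformly syndetically regularly stable if for every $\varepsilon\in\mathscr U_X$ there exist $\delta\in\mathscr U_X$ and a syndetic subsemigroup $A$ of $T$ with $A\delta\subseteq\varepsilon$. A flow is an a.p. flow if for every $\alpha\in\mathscr U_X$ there is a syndetic $A\subseteq T$ with $Ax\subseteq\alpha[x]$ for all $x\in X$. *)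

theory Defs
  imports "HOL-Analysis.Analysis"
begin

text \<open>The phase group T is a Hausdorff topological group, written additively
(not necessarily commutative): type class topological_group_add + t2_space.
The phase space X is a compact Hausdorff space (type with compact UNIV, t2_space).\<close>

definition flow :: "('g::topological_group_add \<Rightarrow> 'x::topological_space \<Rightarrow> 'x) \<Rightarrow> bool" where
  "flow act \<longleftrightarrow> continuous_on UNIV (\<lambda>p. act (fst p) (snd p))
     \<and> (\<forall>x. act 0 x = x) \<and> (\<forall>s t x. act (s + t) x = act s (act t x))"

text \<open>Uniformity of a compact Hausdorff space: the (unique) uniformity consists of all
neighbourhoods of the diagonal in X \<times> X.\<close>
definition entourage :: "('x::topological_space \<times> 'x) set \<Rightarrow> bool" where
  "entourage E \<longleftrightarrow> (\<exists>U. open U \<and> {(x, x) | x. True} \<subseteq> U \<and> U \<subseteq> E)"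

definition syndetic :: "'g::{topological_space, plus} set \<Rightarrow> bool" where
  "syndetic A \<longleftrightarrow> (\<exists>K. compact K \<and> (\<forall>t. ((\<lambda>k. k + t) ` K) \<inter> A \<noteq> {}))"

definition subsemigroup :: "'g::plus set \<Rightarrow> bool" where
  "subsemigroup A \<longleftrightarrow> (\<forall>a\<in>A. \<forall>b\<in>A. a + b \<in> A)"

definition act_rel :: "('g \<Rightarrow> 'x \<Rightarrow> 'x) \<Rightarrow> 'g set \<Rightarrow> ('x \<times> 'x) set \<Rightarrow> ('x \<times> 'x) set" where
  "act_rel act A \<delta> = {(act a x, act a y) | a x y. a \<in> A \<and> (x, y) \<in> \<delta>}"

definition unif_synd_reg_stable ::
  "('g::topological_group_add \<Rightarrow> 'x::topological_space \<Rightarrow> 'x) \<Rightarrow> bool" where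
  "unif_synd_reg_stable act \<longleftrightarrow>
     (\<forall>\<epsilon>. entourage \<epsilon> \<longrightarrow> (\<exists>\<delta> A. entourage \<delta> \<and> syndetic A \<and> subsemigroup A
        \<and> act_rel act A \<delta> \<subseteq> \<epsilon>))"

definition ap_flow :: "('g::topological_group_add \<Rightarrow> 'x::topological_space \<Rightarrow> 'x) \<Rightarrow> bool" where
  "ap_flow act \<longleftrightarrow>
     (\<forall>\<alpha>. entourage \<alpha> \<longrightarrow> (\<exists>A. syndetic A \<and> (\<forall>x. \<forall>a\<in>A. (x, act a x) \<in> \<alpha>)))"

end

theory Submission
  imports Defs
begin


lemma open_vimage_UNIV: "continuous_on UNIV f \<Longrightarrow> open S \<Longrightarrow> open (f -` S)"
  using continuous_on_open_vimage[of UNIV f] by auto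

lemma entourage_diag: "entourage E \<Longrightarrow> (x, x) \<in> E"
  unfolding entourage_def by blast

lemma entourageI: "open E \<Longrightarrow> (\<And>x. (x, x) \<in> E) \<Longrightarrow> entourage E"
  unfolding entourage_def by blast

lemma entourage_Int: "entourage E \<Longrightarrow> entourage F \<Longrightarrow> entourage (E \<inter> F)"
  unfolding entourage_def
  apply clarify
  subgoal for U V by (rule exI[of _ "U \<inter> V"]) auto
  done

lemma sep_point_compact:
  fixes S :: "'x::t2_space set"
  assumes "compact S" "x \<notin> S"
  shows "\<exists>W V. open W \<and> open V \<and> x \<in> W \<and> S \<subseteq> V \<and> W \<inter> V = {}"
proof -
  have "\<forall>s\<in>S. \<exists>u v. open u \<and> open v \<and> s \<in> u \<and> x \<in> v \<and> u \<inter> v = {}"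
    using assms(2) hausdorff by metis
  then obtain u v where uv: "\<And>s. s\<in>S \<Longrightarrow> open (u s) \<and> open (v s) \<and> s \<in> u s \<and> x \<in> v s \<and> u s \<inter> v s = {}"
    by metis
  obtain D where D: "D \<subseteq> S" "finite D" "S \<subseteq> (\<Union>s\<in>D. u s)"
    using compactE_image[OF assms(1), of S u] uv by blast
  show ?thesis
  proof (intro exI conjI)
    show "open (\<Inter>s\<in>D. v s)" using D uv by (intro open_INT) auto
    show "open (\<Union>s\<in>D. u s)" using D uv by (intro open_UN) auto
    show "x \<in> (\<Inter>s\<in>D. v s)" using D uv by auto
    show "S \<subseteq> (\<Union>s\<in>D. u s)" by fact
    show "(\<Inter>s\<in>D. v s) \<inter> (\<Union>s\<in>D. u s) = {}" using D uv by fastforce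
  qed
qed

lemma entourage_half:
  fixes E :: "('x::t2_space \<times> 'x) set"
  assumes cpt: "compact (UNIV::'x set)" and "entourage E"
  shows "\<exists>D. entourage D \<and> (\<forall>a b c. (a,b)\<in>D \<longrightarrow> (b,c)\<in>D \<longrightarrow> (a,c)\<in>E)"
proof -
  obtain U where U: "open U" "{(x,x)|x. True} \<subseteq> U" "U \<subseteq> E"
    using assms(2) entourage_def by blast
  have "\<exists>V. open V \<and> x \<in> V \<and> V \<times> V \<subseteq> U" for x
  proof -
    have "(x,x) \<in> U" using U by auto
    then obtain A B where AB: "open A" "open B" "(x,x) \<in> A \<times> B" "A \<times> B \<subseteq> U"
      by (rule open_prod_elim[OF U(1)])
    have "open (A \<inter> B)" using AB by blast
    moreover have "x \<in> A \<inter> B" using AB(3) by blast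
    moreover have "(A \<inter> B) \<times> (A \<inter> B) \<subseteq> U" using AB(4) by blast
    ultimately show ?thesis by blast
  qed
  then have "\<forall>x. \<exists>V. open V \<and> x \<in> V \<and> V \<times> V \<subseteq> U" by blast
  then obtain V where V: "\<forall>x. open (V x) \<and> x \<in> V x \<and> V x \<times> V x \<subseteq> U"
    by (rule choice[THEN exE])
  have "\<exists>WO. open (fst WO) \<and> open (snd WO) \<and> x \<in> fst WO \<and> - V x \<subseteq> snd WO \<and> fst WO \<inter> snd WO = {}" for x
  proof -
    have "closed (- V x)" using V by blast
    then have "compact (UNIV \<inter> - V x)" by (rule compact_Int_closed[OF cpt])
    then have c: "compact (- V x)" by simp
    have "x \<notin> - V x" using V by blast
    from sep_point_compact[OF c this] obtain W1 W2 where
      "open W1" "open W2" "x \<in> W1" "- V x \<subseteq> W2" "W1 \<inter> W2 = {}" by blast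
    then show ?thesis by (intro exI[of _ "(W1, W2)"]) simp
  qed
  then have "\<forall>x. \<exists>WO. open (fst WO) \<and> open (snd WO) \<and> x \<in> fst WO \<and> - V x \<subseteq> snd WO \<and> fst WO \<inter> snd WO = {}" by blast
  then obtain WO where WO0: "\<forall>x. open (fst (WO x)) \<and> open (snd (WO x)) \<and> x \<in> fst (WO x) \<and> - V x \<subseteq> snd (WO x) \<and> fst (WO x) \<inter> snd (WO x) = {}"
    by (rule choice[THEN exE])
  define W where "W = (\<lambda>x. fst (WO x))"
  define O' where "O' = (\<lambda>x. snd (WO x))"
  have WO: "\<And>x. open (W x) \<and> open (O' x) \<and> x \<in> W x \<and> - V x \<subseteq> O' x \<and> W x \<inter> O' x = {}"
    using WO0 unfolding W_def O'_def by blast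
  have cov: "UNIV \<subseteq> (\<Union>y\<in>UNIV. W y)" using WO by blast
  obtain F where F: "F \<subseteq> UNIV" "finite F" "UNIV \<subseteq> (\<Union>y\<in>F. W y)"
    by (rule compactE_image[OF cpt, of UNIV W, OF _ cov]) (use WO in blast)+
  define D where "D = (\<Inter>y\<in>F. (V y \<times> V y) \<union> (O' y \<times> O' y))"
  have "entourage D"
  proof (rule entourageI)
    have "\<forall>y\<in>F. open ((V y \<times> V y) \<union> (O' y \<times> O' y))"
      using V WO by (simp add: open_Un open_Times)
    then show "open D" unfolding D_def using F(2) by (rule open_INT[rotated])
    show "(x, x) \<in> D" for x
    proof -
      have "x \<in> V y \<or> x \<in> O' y" for y using WO[of y] by blast
      then show ?thesis unfolding D_def by blast
    qed
  qed
  moreover have "(a,c) \<in> E" if ab: "(a,b)\<in>D" and bc: "(b,c)\<in>D" for a b c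
  proof -
    obtain y where y: "y \<in> F" "b \<in> W y" using F(3) by blast
    then have nb: "b \<notin> O' y" using WO[of y] by blast
    have 1: "(a,b) \<in> (V y \<times> V y) \<union> (O' y \<times> O' y)" using ab y(1) unfolding D_def by blast
    have 2: "(b,c) \<in> (V y \<times> V y) \<union> (O' y \<times> O' y)" using bc y(1) unfolding D_def by blast
    have "(a,c) \<in> V y \<times> V y" using 1 2 nb by blast
    then show ?thesis using V U(3) by blast
  qed
  ultimately show ?thesis by blast
qed

lemma entourage_sym:
  fixes E :: "('x::topological_space \<times> 'x) set"
  assumes "entourage E"
  shows "entourage {p. p \<in> E \<and> (snd p, fst p) \<in> E}"
proof -
  obtain U where U: "open U" "{(x,x)|x. True} \<subseteq> U" "U \<subseteq> E"
    using assms entourage_def by blast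
  have c: "continuous_on UNIV (\<lambda>p::'x\<times>'x. (snd p, fst p))"
    by (rule continuous_on_Pair; rule continuous_on_snd continuous_on_fst; rule continuous_on_id)
  have "open ((\<lambda>p. (snd p, fst p)) -` U)" by (rule open_vimage_UNIV[OF c U(1)])
  then have o: "open (U \<inter> (\<lambda>p. (snd p, fst p)) -` U)" using U(1) by (rule open_Int[rotated])
  have d: "(x,x) \<in> U \<inter> (\<lambda>p. (snd p, fst p)) -` U" for x using U(2) by auto
  have "U \<inter> (\<lambda>p. (snd p, fst p)) -` U \<subseteq> {p. p \<in> E \<and> (snd p, fst p) \<in> E}" using U(3) by auto
  then show ?thesis using o d unfolding entourage_def by blast
qed

lemma entourage_half_sym:
  fixes E :: "('x::t2_space \<times> 'x) set"
  assumes cpt: "compact (UNIV::'x set)" and "entourage E"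
  shows "\<exists>D. entourage D \<and> (\<forall>a b. (a,b)\<in>D \<longrightarrow> (b,a)\<in>D) \<and> (\<forall>a b c. (a,b)\<in>D \<longrightarrow> (b,c)\<in>D \<longrightarrow> (a,c)\<in>E)"
proof -
  obtain D where D: "entourage D" "\<forall>a b c. (a,b)\<in>D \<longrightarrow> (b,c)\<in>D \<longrightarrow> (a,c)\<in>E"
    using entourage_half[OF assms] by blast
  let ?S = "{p. p \<in> D \<and> (snd p, fst p) \<in> D}"
  have "entourage ?S" by (rule entourage_sym[OF D(1)])
  moreover have "\<forall>a b. (a,b)\<in>?S \<longrightarrow> (b,a)\<in>?S" by simp
  moreover have "\<forall>a b c. (a,b)\<in>?S \<longrightarrow> (b,c)\<in>?S \<longrightarrow> (a,c)\<in>E" using D(2) by blast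
  ultimately show ?thesis by blast
qed

lemma entourage_five:
  fixes E :: "('x::t2_space \<times> 'x) set"
  assumes cpt: "compact (UNIV::'x set)" and "entourage E"
  shows "\<exists>D. entourage D \<and> (\<forall>a b. (a,b)\<in>D \<longrightarrow> (b,a)\<in>D) \<and>
    (\<forall>a b c d e f. (a,b)\<in>D \<longrightarrow> (b,c)\<in>D \<longrightarrow> (c,d)\<in>D \<longrightarrow> (d,e)\<in>D \<longrightarrow> (e,f)\<in>D \<longrightarrow> (a,f)\<in>E)"
proof -
  obtain D1 where D1: "entourage D1" "\<And>a b c. (a,b)\<in>D1 \<Longrightarrow> (b,c)\<in>D1 \<Longrightarrow> (a,c)\<in>E"
    using entourage_half[OF assms] by blast
  obtain D2 where D2: "entourage D2" "\<And>a b c. (a,b)\<in>D2 \<Longrightarrow> (b,c)\<in>D2 \<Longrightarrow> (a,c)\<in>D1"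
    using entourage_half[OF cpt D1(1)] by blast
  obtain D3 where D3: "entourage D3" "\<forall>a b. (a,b)\<in>D3 \<longrightarrow> (b,a)\<in>D3" "\<And>a b c. (a,b)\<in>D3 \<Longrightarrow> (b,c)\<in>D3 \<Longrightarrow> (a,c)\<in>D2"
    using entourage_half_sym[OF cpt D2(1)] by blast
  have s32: "(a,b) \<in> D2" if "(a,b) \<in> D3" for a b using D3(3)[OF that entourage_diag[OF D3(1)]] .
  have s21: "(a,b) \<in> D1" if "(a,b) \<in> D2" for a b using D2(2)[OF that entourage_diag[OF D2(1)]] .
  have "(a,f)\<in>E" if "(a,b)\<in>D3" "(b,c)\<in>D3" "(c,d)\<in>D3" "(d,e)\<in>D3" "(e,f)\<in>D3" for a b c d e f
  proof -
    have "(a,c) \<in> D2" by (rule D3(3)[OF that(1) that(2)])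
    moreover have "(c,e) \<in> D2" by (rule D3(3)[OF that(3) that(4)])
    ultimately have "(a,e) \<in> D1" by (rule D2(2))
    moreover have "(e,f) \<in> D1" by (rule s21[OF s32[OF that(5)]])
    ultimately show ?thesis by (rule D1(2))
  qed
  then show ?thesis using D3(1,2) by (intro exI[of _ D3]) simp
qed

lemma entourage_cover:
  fixes E :: "('x::topological_space \<times> 'x) set"
  assumes cpt: "compact (UNIV::'x set)" and "entourage E"
  shows "\<exists>Y. finite Y \<and> (\<forall>x. \<exists>y\<in>Y. (x,y) \<in> E)"
proof -
  obtain U where U: "open U" "{(x,x)|x. True} \<subseteq> U" "U \<subseteq> E"
    using assms(2) entourage_def by blast
  have op: "open ((\<lambda>x. (x,y)) -` U)" for y
    by (rule open_vimage_UNIV[OF _ U(1)]) (rule continuous_on_Pair[OF continuous_on_id continuous_on_const])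
  have cov: "UNIV \<subseteq> (\<Union>y\<in>UNIV. (\<lambda>x. (x,y)) -` U)" using U(2) by blast
  obtain Y where "Y \<subseteq> UNIV" "finite Y" "UNIV \<subseteq> (\<Union>y\<in>Y. (\<lambda>x. (x,y)) -` U)"
    by (rule compactE_image[OF cpt, of UNIV "\<lambda>y. (\<lambda>x. (x,y)) -` U", OF _ cov]) (use op in blast)+
  then show ?thesis using U(3) by blast
qed



lemma compact_equicont:
  fixes act :: "'g::topological_group_add \<Rightarrow> 'x::topological_space \<Rightarrow> 'x"
  assumes fl: "flow act" and K: "compact K" and E: "entourage E"
  shows "\<exists>D. entourage D \<and> (\<forall>k\<in>K. \<forall>p q. (p,q)\<in>D \<longrightarrow> (act k p, act k q) \<in> E)"
proof -
  obtain U where U: "open U" "{(x,x)|x. True} \<subseteq> U" "U \<subseteq> E"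
    using E entourage_def by blast
  define h where "h = (\<lambda>p. act (fst p) (snd p))"
  have hc: "continuous_on UNIV h" using fl unfolding flow_def h_def by blast
  define g where "g = (\<lambda>w::('x\<times>'x)\<times>'g. (h (snd w, fst (fst w)), h (snd w, snd (fst w))))"
  have gc: "continuous_on UNIV g" unfolding g_def
    by (intro continuous_on_Pair continuous_on_compose2[OF hc]
        continuous_on_Pair[OF continuous_on_snd[OF continuous_on_id] continuous_on_fst[OF continuous_on_fst[OF continuous_on_id]]]
        continuous_on_Pair[OF continuous_on_snd[OF continuous_on_id] continuous_on_snd[OF continuous_on_fst[OF continuous_on_id]]]) auto
  define W where "W = g -` U"
  have Wo: "open W" unfolding W_def by (rule open_vimage_UNIV[OF gc U(1)])
  have "\<exists>X0. (x,x) \<in> X0 \<and> open X0 \<and> X0 \<times> K \<subseteq> W" for x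
  proof (rule Elementary_Topology.tube_lemma[OF K Wo])
    show "{(x, x)} \<times> K \<subseteq> W" using U(2) unfolding W_def g_def h_def by auto
  qed
  then obtain X0 where X0: "\<And>x. (x,x) \<in> X0 x \<and> open (X0 x) \<and> X0 x \<times> K \<subseteq> W" by metis
  define D where "D = (\<Union>x. X0 x)"
  have "entourage D" unfolding D_def using X0 by (intro entourageI) auto
  moreover have "(act k p, act k q) \<in> E" if "k \<in> K" "(p,q) \<in> D" for k p q
  proof -
    have "((p,q),k) \<in> W" using that X0 unfolding D_def by blast
    then show ?thesis using U(3) unfolding W_def g_def h_def by auto
  qed
  ultimately show ?thesis by blast
qed

lemma classify:
  fixes act :: "'g \<Rightarrow> 'x::topological_space \<Rightarrow> 'x"
  assumes cpt: "compact (UNIV::'x set)"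
    and d: "entourage d" and e: "entourage e"
    and es: "\<forall>u v. (u,v)\<in>e \<longrightarrow> (v,u)\<in>e"
    and Ad: "\<forall>a\<in>A. \<forall>x y. (x,y)\<in>d \<longrightarrow> (act a x, act a y) \<in> e"
    and G: "\<forall>u w1 w2 w3 v. (u,w1)\<in>e \<longrightarrow> (w1,w2)\<in>e \<longrightarrow> (w2,w3)\<in>e \<longrightarrow> (w3,v)\<in>e \<longrightarrow> (u,v)\<in>G"
  shows "\<exists>f::'g \<Rightarrow> 'x \<Rightarrow> 'x. finite (f ` A) \<and>
     (\<forall>a\<in>A. \<forall>b\<in>A. f a = f b \<longrightarrow> (\<forall>x. (act a x, act b x) \<in> G))"
proof -
  obtain Y where Y: "finite Y" "\<forall>x. \<exists>y\<in>Y. (x,y) \<in> d" using entourage_cover[OF cpt d] by blast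
  obtain Z where Z: "finite Z" "\<forall>x. \<exists>z\<in>Z. (x,z) \<in> e" using entourage_cover[OF cpt e] by blast
  define f where "f = (\<lambda>a. \<lambda>y. if y \<in> Y then (SOME z. z \<in> Z \<and> (act a y, z) \<in> e) else undefined)"
  have fz: "f a y \<in> Z \<and> (act a y, f a y) \<in> e" if "y \<in> Y" for a y
    using someI_ex[of "\<lambda>z. z \<in> Z \<and> (act a y, z) \<in> e"] Z(2) that unfolding f_def by auto
  have "f ` A \<subseteq> PiE Y (\<lambda>_. Z)" using fz unfolding f_def by (auto simp: PiE_def extensional_def)
  then have "finite (f ` A)" using finite_PiE[OF Y(1), of "\<lambda>_. Z"] Z(1) finite_subset by blast
  moreover have "(act a x, act b x) \<in> G" if "a \<in> A" "b \<in> A" "f a = f b" for a b x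
  proof -
    obtain y where y: "y \<in> Y" "(x,y) \<in> d" using Y by blast
    have 1: "(act a x, act a y) \<in> e" using Ad that y by blast
    have 2: "(act a y, f a y) \<in> e" using fz y by blast
    have 3: "(f a y, act b y) \<in> e" using fz[OF y(1), of b] that(3) es by metis
    have 4: "(act b y, act b x) \<in> e" using Ad that y es by blast
    show ?thesis using G 1 2 3 4 by blast
  qed
  ultimately show ?thesis by blast
qed

fun gmul :: "nat \<Rightarrow> 'g::monoid_add \<Rightarrow> 'g" where
  "gmul 0 b = 0"
| "gmul (Suc n) b = gmul n b + b"

lemma gmul_add: "gmul (m + n) b = gmul m b + gmul n b"
  by (induction n) (auto simp: add.assoc)

lemma gmul_in: "subsemigroup A \<Longrightarrow> b \<in> A \<Longrightarrow> n \<ge> 1 \<Longrightarrow> gmul n b \<in> A"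
proof (induction n)
  case 0 then show ?case by simp
next
  case (Suc n)
  then show ?case by (cases n) (auto simp: subsemigroup_def)
qed

lemma act_add: "flow act \<Longrightarrow> act (s + t) x = act s (act t x)"
  unfolding flow_def by blast

lemma act_zero: "flow act \<Longrightarrow> act 0 x = x"
  unfolding flow_def by blast

lemma act_inv: "flow (act::'g::topological_group_add \<Rightarrow> 'x::topological_space \<Rightarrow> 'x) \<Longrightarrow> act u (act (- u) y) = y"
  using act_add[of act u "-u" y] act_zero[of act y] by simp

lemma recurrence:
  fixes act :: "'g::topological_group_add \<Rightarrow> 'x::topological_space \<Rightarrow> 'x"
  assumes fl: "flow act" and fin: "finite (f ` A)"
    and cls: "\<forall>a\<in>A. \<forall>b\<in>A. f a = f b \<longrightarrow> (\<forall>x. (act a x, act b x) \<in> G)"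
    and sg: "subsemigroup A" and b: "b \<in> A"
  shows "\<exists>m\<ge>1. \<forall>y. (y, act (gmul m b) y) \<in> G"
proof -
  define N where "N = card (f ` A)"
  have sub: "(\<lambda>n. f (gmul n b)) ` {1..N+1} \<subseteq> f ` A" using gmul_in[OF sg b] by auto
  have "\<not> inj_on (\<lambda>n. f (gmul n b)) {1..N+1}"
  proof
    assume "inj_on (\<lambda>n. f (gmul n b)) {1..N+1}"
    then have "card ((\<lambda>n. f (gmul n b)) ` {1..N+1}) = N + 1" by (simp add: card_image)
    moreover have "card ((\<lambda>n. f (gmul n b)) ` {1..N+1}) \<le> N"
      using card_mono[OF fin sub] N_def by simp
    ultimately show False by simp
  qed
  then obtain i j where ij: "i \<in> {1..N+1}" "j \<in> {1..N+1}" "i \<noteq> j" "f (gmul i b) = f (gmul j b)"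
    unfolding inj_on_def by blast
  have key: "\<exists>m\<ge>1. \<forall>y. (y, act (gmul m b) y) \<in> G"
    if "i \<ge> 1" "i < j" "f (gmul i b) = f (gmul j b)" for i j
  proof (intro exI[of _ "j - i"] conjI allI)
    show "1 \<le> j - i" using that by simp
    fix y
    define x where "x = act (- gmul i b) y"
    have y: "act (gmul i b) x = y" unfolding x_def by (rule act_inv[OF fl])
    have "gmul j b = gmul (j - i) b + gmul i b" using gmul_add[of "j - i" i b] that by simp
    then have "act (gmul j b) x = act (gmul (j - i) b) y" using act_add[OF fl] y by simp
    moreover have "(act (gmul i b) x, act (gmul j b) x) \<in> G"
      using cls gmul_in[OF sg b] that by auto
    ultimately show "(y, act (gmul (j - i) b) y) \<in> G" using y by simp
  qed
  show ?thesis
  proof (cases "i < j")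
    case True then show ?thesis using key ij by auto
  next
    case False then have "j < i" using ij by simp
    then show ?thesis using key[of j i] ij by auto
  qed
qed



theorem corollary2:
  fixes act :: "'g::{topological_group_add, t2_space} \<Rightarrow> 'x::t2_space \<Rightarrow> 'x"
  assumes "compact (UNIV :: 'x set)"
    and "flow act"
    and "unif_synd_reg_stable act"
  shows "ap_flow act"
  unfolding ap_flow_def
proof (intro allI impI)
  note cpt = assms(1) and fl = assms(2) and st = assms(3)
  fix \<alpha> :: "('x\<times>'x) set"
  assume \<alpha>: "entourage \<alpha>"
  obtain e where e: "entourage e" "\<forall>a b. (a,b)\<in>e \<longrightarrow> (b,a)\<in>e"
    "\<forall>a b c d e' f. (a,b)\<in>e \<longrightarrow> (b,c)\<in>e \<longrightarrow> (c,d)\<in>e \<longrightarrow> (d,e')\<in>e \<longrightarrow> (e',f)\<in>e \<longrightarrow> (a,f)\<in>\<alpha>"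
    using entourage_five[OF cpt \<alpha>] by blast
  define G1 where "G1 = {(u,v). \<exists>w1 w2 w3. (u,w1)\<in>e \<and> (w1,w2)\<in>e \<and> (w2,w3)\<in>e \<and> (w3,v)\<in>e}"
  have G1hyp: "\<forall>u w1 w2 w3 v. (u,w1)\<in>e \<longrightarrow> (w1,w2)\<in>e \<longrightarrow> (w2,w3)\<in>e \<longrightarrow> (w3,v)\<in>e \<longrightarrow> (u,v)\<in>G1"
    unfolding G1_def by blast
  obtain d0 A1 where A1: "entourage d0" "syndetic A1" "subsemigroup A1" "act_rel act A1 d0 \<subseteq> e"
    using st e(1) unfolding unif_synd_reg_stable_def by blast
  have A1m: "\<forall>a\<in>A1. \<forall>x y. (x,y)\<in>d0 \<longrightarrow> (act a x, act a y) \<in> e"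
    using A1(4) unfolding act_rel_def by blast
  obtain K1 where K1: "compact K1" "\<forall>s. (\<lambda>k. k + s) ` K1 \<inter> A1 \<noteq> {}"
    using A1(2) unfolding syndetic_def by blast
  obtain f1 :: "'g \<Rightarrow> 'x \<Rightarrow> 'x" where f1: "finite (f1 ` A1)"
    "\<forall>a\<in>A1. \<forall>b\<in>A1. f1 a = f1 b \<longrightarrow> (\<forall>x. (act a x, act b x) \<in> G1)"
    using classify[OF cpt A1(1) e(1) e(2) A1m G1hyp] by blast
  define d1 where "d1 = d0 \<inter> e"
  have d1: "entourage d1" unfolding d1_def by (rule entourage_Int[OF A1(1) e(1)])
  obtain \<delta>1 where \<delta>1: "entourage \<delta>1" "\<forall>k\<in>K1. \<forall>p q. (p,q)\<in>\<delta>1 \<longrightarrow> (act k p, act k q) \<in> d1"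
    using compact_equicont[OF fl K1(1) d1] by blast
  obtain e2 where e2: "entourage e2" "\<forall>a b. (a,b)\<in>e2 \<longrightarrow> (b,a)\<in>e2"
    "\<forall>a b c d e' f. (a,b)\<in>e2 \<longrightarrow> (b,c)\<in>e2 \<longrightarrow> (c,d)\<in>e2 \<longrightarrow> (d,e')\<in>e2 \<longrightarrow> (e',f)\<in>e2 \<longrightarrow> (a,f)\<in>\<delta>1"
    using entourage_five[OF cpt \<delta>1(1)] by blast
  have G2hyp: "\<forall>u w1 w2 w3 v. (u,w1)\<in>e2 \<longrightarrow> (w1,w2)\<in>e2 \<longrightarrow> (w2,w3)\<in>e2 \<longrightarrow> (w3,v)\<in>e2 \<longrightarrow> (u,v)\<in>\<delta>1"
  proof (intro allI impI)
    fix u w1 w2 w3 v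
    assume h: "(u,w1)\<in>e2" "(w1,w2)\<in>e2" "(w2,w3)\<in>e2" "(w3,v)\<in>e2"
    show "(u,v)\<in>\<delta>1"
      using e2(3)[rule_format, OF h entourage_diag[OF e2(1), of v]] .
  qed
  obtain d2 A2 where A2: "entourage d2" "syndetic A2" "subsemigroup A2" "act_rel act A2 d2 \<subseteq> e2"
    using st e2(1) unfolding unif_synd_reg_stable_def by blast
  have A2m: "\<forall>a\<in>A2. \<forall>x y. (x,y)\<in>d2 \<longrightarrow> (act a x, act a y) \<in> e2"
    using A2(4) unfolding act_rel_def by blast
  obtain K2 where K2: "compact K2" "\<forall>s. (\<lambda>k. k + s) ` K2 \<inter> A2 \<noteq> {}"
    using A2(2) unfolding syndetic_def by blast
  obtain f2 :: "'g \<Rightarrow> 'x \<Rightarrow> 'x" where f2: "finite (f2 ` A2)"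
    "\<forall>a\<in>A2. \<forall>b\<in>A2. f2 a = f2 b \<longrightarrow> (\<forall>x. (act a x, act b x) \<in> \<delta>1)"
    using classify[OF cpt A2(1) e2(1) e2(2) A2m G2hyp] by blast
  define rep where "rep = (\<lambda>v. SOME a. a \<in> A2 \<and> f2 a = v)"
  define F2 where "F2 = rep ` (f2 ` A2)"
  have F2fin: "finite F2" unfolding F2_def using f2(1) by blast
  have rep: "rep (f2 a) \<in> A2 \<and> f2 (rep (f2 a)) = f2 a" if "a \<in> A2" for a
    unfolding rep_def by (rule someI_ex) (use that in blast)
  define kk where "kk = (\<lambda>t. SOME k. k \<in> K1 \<and> k + t \<in> A1)"
  have kk: "kk t \<in> K1 \<and> kk t + t \<in> A1" for t
  proof -
    have "\<exists>k. k \<in> K1 \<and> k + t \<in> A1" using K1(2)[rule_format, of t] by blast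
    then show ?thesis unfolding kk_def by (rule someI_ex)
  qed
  define mm where "mm = (\<lambda>b. SOME m. m \<ge> 1 \<and> (\<forall>y. (y, act (gmul m b) y) \<in> G1))"
  have mm: "mm b \<ge> 1 \<and> (\<forall>y. (y, act (gmul (mm b) b) y) \<in> G1)" if "b \<in> A1" for b
    unfolding mm_def by (rule someI_ex) (rule recurrence[OF fl f1(1) f1(2) A1(3) that])
  define c where "c = (\<lambda>t. gmul (mm (kk t + t) - 1) (kk t + t) + kk t)"
  define K' where "K' = (\<Union>t\<in>F2. (\<lambda>k. c t + k) ` K2)"
  define B where "B = {b. \<forall>x. (x, act b x) \<in> \<alpha>}"
  have K'c: "compact K'" unfolding K'_def
  proof (rule compact_UN[OF F2fin])
    fix t
    have "continuous_on K2 (\<lambda>k. c t + k)" by (intro continuous_on_add continuous_on_const continuous_on_id)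
    then show "compact ((\<lambda>k. c t + k) ` K2)" by (rule compact_continuous_image[OF _ K2(1)])
  qed
  have main: "\<exists>k\<in>K'. k + s \<in> B" for s
  proof -
    obtain k2 where k2: "k2 \<in> K2" "k2 + s \<in> A2" using K2(2)[rule_format, of s] by blast
    define a where "a = k2 + s"
    define t where "t = rep (f2 a)"
    have t: "t \<in> A2" "f2 t = f2 a" using rep[of a] k2(2) unfolding t_def a_def by auto
    have tF: "t \<in> F2" unfolding F2_def t_def using k2(2) a_def by blast
    have close: "(act t x, act a x) \<in> \<delta>1" for x using f2(2) t k2(2) a_def by blast
    define b where "b = kk t + t"
    have b: "b \<in> A1" "kk t \<in> K1" using kk[of t] b_def by auto
    define m where "m = mm b"
    have m: "m \<ge> 1" "\<forall>y. (y, act (gmul m b) y) \<in> G1" using mm[OF b(1)] m_def by auto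
    have ct: "c t = gmul (m - 1) b + kk t" unfolding c_def m_def b_def by simp
    have ctt: "c t + t = gmul m b"
    proof -
      have "c t + t = gmul (m - 1) b + b" unfolding ct b_def by (simp add: add.assoc)
      also have "\<dots> = gmul (Suc (m - 1)) b" by simp
      also have "Suc (m - 1) = m" using m(1) by simp
      finally show ?thesis .
    qed
    have goal: "(x, act (c t + a) x) \<in> \<alpha>" for x
    proof -
      have p1: "(act (kk t) (act t x), act (kk t) (act a x)) \<in> d1"
        using \<delta>1(2) b(2) close[of x] by blast
      have p2: "(act (c t) (act t x), act (c t) (act a x)) \<in> e"
      proof (cases "m - 1 = 0")
        case True
        then have "c t = kk t" using ct by simp
        then show ?thesis using p1 unfolding d1_def by simp
      next
        case False
        then have "gmul (m - 1) b \<in> A1" using gmul_in[OF A1(3) b(1)] by simp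
        moreover have "(act (kk t) (act t x), act (kk t) (act a x)) \<in> d0" using p1 unfolding d1_def by simp
        ultimately have "(act (gmul (m - 1) b) (act (kk t) (act t x)), act (gmul (m - 1) b) (act (kk t) (act a x))) \<in> e"
          using A1m by blast
        then show ?thesis unfolding ct using act_add[OF fl] by simp
      qed
      have p3: "act (c t) (act t x) = act (gmul m b) x" using act_add[OF fl, of "c t" t x] ctt by simp
      have p4: "(x, act (gmul m b) x) \<in> G1" using m(2) by blast
      then obtain w1 w2 w3 where w: "(x,w1)\<in>e" "(w1,w2)\<in>e" "(w2,w3)\<in>e" "(w3, act (gmul m b) x)\<in>e"
        unfolding G1_def by blast
      have "(act (gmul m b) x, act (c t) (act a x)) \<in> e" using p2 p3 by simp
      then have "(x, act (c t) (act a x)) \<in> \<alpha>" using e(3)[rule_format, OF w] by blast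
      then show ?thesis using act_add[OF fl, of "c t" a x] by simp
    qed
    have "c t + k2 \<in> K'" unfolding K'_def using tF k2(1) by blast
    moreover have "(c t + k2) + s \<in> B" unfolding B_def using goal a_def by (simp add: add.assoc)
    ultimately show ?thesis by blast
  qed
  have "syndetic B" unfolding syndetic_def
  proof (intro exI conjI allI)
    show "compact K'" by (rule K'c)
    fix s
    from main[of s] show "(\<lambda>k. k + s) ` K' \<inter> B \<noteq> {}" by blast
  qed
  then show "\<exists>A. syndetic A \<and> (\<forall>x. \<forall>a\<in>A. (x, act a x) \<in> \<alpha>)" unfolding B_def by blast
qed


end
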